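(* $\operatorname{cov}(\mathcal N)\le\mathfrak b_3$ and $\operatorname{non}(\mathcal N)\ge\mathfrak d_3$.
   Context: Let $T^*$ and $\rho$ be as follows, by induction on $h\ge0$: $T^*\cap\omega^0=\{\langle\rangle\}$; $\rho(h)=\max(|T^*\cap\omega^h|,h+2)$, $\pi(h)=((h+1)^2\rho(h)^{h+1})^{\rho(h)^h}$, $a(h)=\pi(h)^{h+2}$, $M(h)=a(h)^2$, and each $s\in T^*\cap\omega^h$ has the $M(h)$ immediate successors $s^\frown\ell$, $\ell<M(h)$. Put $b(h)=(h+1)^2\rho(h)^{h+1}$. An $R_3$-parameter is a set $\mathcal E\subseteq\omega^\omega$ such that every $e\in\mathcal E$ satisfies $\lim_n e(n)=\infty$, $e(n)\le n$, $\lim_n(n-e(n))=\infty$, and there is $e'\in\mathcal E$ with $e(n)+1\le e'(n)$ for almost all $n$; moreover for every countable $\mathcal E'\subseteq\mathcal E$ there is $e\in\mathcal E$ with $e(n)\ge e'(n)$ for almost all $n$, for every $e'\in\mathcal E'$. Fix an $R_3$-parameter $\mathcal E$ of size $\aleph_1$. Let $\mathcal S=\{\psi\in\prod_h\mathcal P(b(h)):\ |\psi(h)|\le\rho(h)^h\ \forall h\}$, $\mathcal S_e=\{\phi\in\prod_h\mathcal P(b(h)):\ |\phi(h)|\le\rho(h)^{e(h)}\ \forall h\}$, and $\hat{\mathcal S}=\bigcup_{e\in\mathcal E}\mathcal S_e$. For $\psi\in\mathcal S$, $\phi\in\hat{\mathcal S}$ let $\psi\,R_3\,\phi$ iff $\phi(n)\not\subseteq\psi(n)$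 for all but finitely many $n$. Let $\mathfrak b_3$ be the least size of a set $\mathcal A\subseteq\mathcal S$ such that no $\phi\in\hat{\mathcal S}$ satisfies $\psi R_3\phi$ for all $\psi\in\mathcal A$, and $\mathfrak d_3$ the least size of $\mathcal D\subseteq\hat{\mathcal S}$ such that every $\psi\in\mathcal S$ has some $\phi\in\mathcal D$ with $\psi R_3\phi$. $\mathcal N$ is the null ideal. *)

theory Defs
  imports "HOL-Analysis.Analysis"
begin

text \<open>Levels of the tree T*: Tlev h = T* \<inter> \<omega>^h (sequences as lists of length h).
  Each node of level h has M(h) immediate successors, where M(h) is computed from
  rho(h) = max |T* \<inter> \<omega>^h| (h+2).\<close>

definition rho_of :: "nat \<Rightarrow> nat \<Rightarrow> nat" where
  "rho_of c h = max c (h + 2)"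

definition M_of :: "nat \<Rightarrow> nat \<Rightarrow> nat" where
  "M_of c h = (let r = rho_of c h;
                   p = ((h + 1)^2 * r^(h + 1))^(r^h);
                   a = p^(h + 2)
               in a^2)"

fun Tlev :: "nat \<Rightarrow> nat list set" where
  "Tlev 0 = {[]}"
| "Tlev (Suc h) = {s @ [l] | s l. s \<in> Tlev h \<and> l < M_of (card (Tlev h)) h}"

definition Tstar :: "nat list set" where
  "Tstar = (\<Union>h. Tlev h)"

definition rho :: "nat \<Rightarrow> nat" where
  "rho h = max (card {s \<in> Tstar. length s = h}) (h + 2)"

definition piT :: "nat \<Rightarrow> nat" where
  "piT h = ((h + 1)^2 * rho h ^ (h + 1)) ^ (rho h ^ h)"

definition aT :: "nat \<Rightarrow> nat" where
  "aT h = piT h ^ (h + 2)"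

definition MT :: "nat \<Rightarrow> nat" where
  "MT h = aT h ^ 2"

definition bT :: "nat \<Rightarrow> nat" where
  "bT h = (h + 1)^2 * rho h ^ (h + 1)"

definition R3_param :: "(nat \<Rightarrow> nat) set \<Rightarrow> bool" where
  "R3_param E \<longleftrightarrow>
     (\<forall>e\<in>E. filterlim e at_top sequentially
           \<and> (\<forall>n. e n \<le> n)
           \<and> filterlim (\<lambda>n. n - e n) at_top sequentially
           \<and> (\<exists>e'\<in>E. \<forall>\<^sub>F n in sequentially. e n + 1 \<le> e' n))
   \<and> (\<forall>E'. E' \<subseteq> E \<and> countable E' \<longrightarrow>
          (\<exists>e\<in>E. \<forall>e'\<in>E'. \<forall>\<^sub>F n in sequentially. e' n \<le> e n))"

text \<open>The spaces S, S_e and \<hat>S (elements of \<Prod>_h P(b(h)) as functions nat \<Rightarrow> nat set).\<close>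
definition S3 :: "(nat \<Rightarrow> nat set) set" where
  "S3 = {\<psi>. \<forall>h. \<psi> h \<subseteq> {..<bT h} \<and> card (\<psi> h) \<le> rho h ^ h}"

definition S3e :: "(nat \<Rightarrow> nat) \<Rightarrow> (nat \<Rightarrow> nat set) set" where
  "S3e e = {\<phi>. \<forall>h. \<phi> h \<subseteq> {..<bT h} \<and> card (\<phi> h) \<le> rho h ^ e h}"

definition S3hat :: "(nat \<Rightarrow> nat) set \<Rightarrow> (nat \<Rightarrow> nat set) set" where
  "S3hat E = (\<Union>e\<in>E. S3e e)"

definition R3 :: "(nat \<Rightarrow> nat set) \<Rightarrow> (nat \<Rightarrow> nat set) \<Rightarrow> bool" where
  "R3 \<psi> \<phi> \<longleftrightarrow> (\<forall>\<^sub>F n in sequentially. \<not> (\<phi> n \<subseteq> \<psi> n))"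

definition b3_witness :: "(nat \<Rightarrow> nat) set \<Rightarrow> (nat \<Rightarrow> nat set) set \<Rightarrow> bool" where
  "b3_witness E A \<longleftrightarrow> A \<subseteq> S3 \<and> \<not> (\<exists>\<phi>\<in>S3hat E. \<forall>\<psi>\<in>A. R3 \<psi> \<phi>)"

definition d3_witness :: "(nat \<Rightarrow> nat) set \<Rightarrow> (nat \<Rightarrow> nat set) set \<Rightarrow> bool" where
  "d3_witness E D \<longleftrightarrow> D \<subseteq> S3hat E \<and> (\<forall>\<psi>\<in>S3. \<exists>\<phi>\<in>D. R3 \<psi> \<phi>)"

definition covN_witness :: "real set set \<Rightarrow> bool" where
  "covN_witness C \<longleftrightarrow> C \<subseteq> null_sets lebesgue \<and> \<Union>C = UNIV"

definition nonN_witness :: "real set \<Rightarrow> bool" where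
  "nonN_witness X \<longleftrightarrow> X \<notin> null_sets lebesgue"

end

theory Submission
  imports Defs
begin

definition dig :: "nat \<Rightarrow> real \<Rightarrow> nat" where
  "dig n x = nat \<lfloor>real (bT n) * frac x\<rfloor>"

definition Fm :: "real \<Rightarrow> nat \<Rightarrow> nat set" where
  "Fm x = (\<lambda>n. {dig n x})"

lemma rho_ge2: "rho h \<ge> 2"
  unfolding rho_def by auto

lemma bT_pos: "bT h > 0"
  using rho_ge2[of h] unfolding bT_def by simp

lemma dig_lt: "dig n x < bT n"
proof -
  have b: "real (bT n) > 0" using bT_pos[of n] by simp
  have "real (bT n) * frac x < real (bT n)" using b frac_lt_1[of x] by simp
  then have "\<lfloor>real (bT n) * frac x\<rfloor> < int (bT n)"
    by (simp add: floor_less_iff)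
  moreover have "0 \<le> \<lfloor>real (bT n) * frac x\<rfloor>" using b by (simp add: frac_ge_0)
  ultimately show ?thesis unfolding dig_def by (simp add: nat_less_iff)
qed

lemma Fm_S3e: "Fm x \<in> S3e e"
proof -
  have "1 \<le> rho h ^ e h" for h using rho_ge2[of h] by (simp add: one_le_power)
  then show ?thesis unfolding S3e_def Fm_def using dig_lt by auto
qed

definition Aset :: "(nat \<Rightarrow> nat set) \<Rightarrow> int \<Rightarrow> nat \<Rightarrow> real set" where
  "Aset \<psi> k n = (\<Union>j\<in>\<psi> n. {real_of_int k + real j / real (bT n) ..< real_of_int k + (real j + 1) / real (bT n)})"

lemma Aset_sets: "finite (\<psi> n) \<Longrightarrow> Aset \<psi> k n \<in> sets lborel"
  unfolding Aset_def by auto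

lemma Aset_measure:
  assumes "\<psi> \<in> S3"
  shows "measure lborel (Aset \<psi> k n) \<le> 1 / (real (n+1))^2"
proof -
  have sub: "\<psi> n \<subseteq> {..<bT n}" and cd: "card (\<psi> n) \<le> rho n ^ n"
    using assms unfolding S3_def by auto
  have fin: "finite (\<psi> n)" using sub finite_subset by blast
  have b: "real (bT n) > 0" using bT_pos[of n] by simp
  have "measure lborel (Aset \<psi> k n) \<le> (\<Sum>j\<in>\<psi> n. measure lborel {real_of_int k + real j / real (bT n) ..< real_of_int k + (real j + 1) / real (bT n)})"
    unfolding Aset_def by (rule measure_UNION_le[OF fin]) auto
  also have "\<dots> = (\<Sum>j\<in>\<psi> n. 1 / real (bT n))"
  proof (rule sum.cong)
    fix j assume "j \<in> \<psi> n"
    have le: "real_of_int k + real j / real (bT n) \<le> real_of_int k + (real j + 1) / real (bT n)"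
      using b by (simp add: divide_right_mono)
    show "measure lborel {real_of_int k + real j / real (bT n) ..< real_of_int k + (real j + 1) / real (bT n)} = 1 / real (bT n)"
      using le b by (simp add: measure_def add_divide_distrib)
  qed simp
  also have "\<dots> = real (card (\<psi> n)) / real (bT n)" by simp
  also have "\<dots> \<le> real (rho n ^ n) / real (bT n)"
    using cd b by (simp add: divide_right_mono)
  also have "\<dots> = 1 / ((real n + 1)^2 * real (rho n))"
    using rho_ge2[of n] unfolding bT_def by (simp add: field_simps)
  also have "\<dots> \<le> 1 / (real (n+1))^2"
  proof -
    have "(real n + 1)^2 * 1 \<le> (real n + 1)^2 * real (rho n)"
      using rho_ge2[of n] by (intro mult_left_mono) auto
    then show ?thesis by (intro divide_left_mono) (auto simp: add.commute)
  qed
  finally show ?thesis .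
qed

lemma summ: "summable (\<lambda>n. 1 / (real (n+1))^2)"
proof -
  have "summable (\<lambda>n. inverse (real n ^ 2))"
    by (rule inverse_power_summable) simp
  then have "summable (\<lambda>n. inverse (real (Suc n) ^ 2))"
    by (subst summable_Suc_iff)
  then show ?thesis by (simp add: inverse_eq_divide)
qed

lemma limsup_null:
  assumes "\<psi> \<in> S3"
  shows "limsup (Aset \<psi> k) \<in> null_sets lborel"
proof (rule borel_cantelli_limsup1)
  have fin: "finite (\<psi> n)" for n
  proof -
    have "\<psi> n \<subseteq> {..<bT n}" using assms unfolding S3_def by auto
    then show ?thesis using finite_subset by blast
  qed
  show "Aset \<psi> k n \<in> sets lborel" for n using Aset_sets fin by auto
  show "emeasure lborel (Aset \<psi> k n) < \<infinity>" for n
  proof -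
    have b: "real (bT n) > 0" using bT_pos[of n] by simp
    have "Aset \<psi> k n \<subseteq> {real_of_int k .. real_of_int k + 1}"
    proof
      fix x assume "x \<in> Aset \<psi> k n"
      then obtain j where j: "j \<in> \<psi> n" and x: "real_of_int k + real j / real (bT n) \<le> x"
          "x < real_of_int k + (real j + 1) / real (bT n)"
        unfolding Aset_def by auto
      have "j < bT n" using j assms unfolding S3_def by auto
      then have "(real j + 1) / real (bT n) \<le> 1" using b by (simp add: divide_simps)
      moreover have "real j / real (bT n) \<ge> 0" by simp
      ultimately show "x \<in> {real_of_int k .. real_of_int k + 1}" using x
        unfolding atLeastAtMost_iff by linarith
    qed
    then have "emeasure lborel (Aset \<psi> k n) \<le> emeasure lborel {real_of_int k .. real_of_int k + 1}"
      by (intro emeasure_mono) auto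
    then show ?thesis by (simp add: order_le_less_trans)
  qed
  show "summable (\<lambda>n. measure lborel (Aset \<psi> k n))"
    by (rule summable_comparison_test'[OF summ]) (use Aset_measure[OF assms] in auto)
qed

lemma in_Aset:
  assumes "dig n x \<in> \<psi> n"
  shows "x \<in> Aset \<psi> \<lfloor>x\<rfloor> n"
proof -
  define b where "b = real (bT n)"
  have b: "b > 0" using bT_pos[of n] unfolding b_def by simp
  define j where "j = dig n x"
  have fx: "frac x = x - real_of_int \<lfloor>x\<rfloor>" by (simp add: frac_def)
  have ge: "0 \<le> \<lfloor>b * frac x\<rfloor>" using b by (simp add: frac_ge_0)
  have jeq: "real j = real_of_int \<lfloor>b * frac x\<rfloor>"
    unfolding j_def dig_def b_def[symmetric] using ge by simp
  have l: "real j \<le> b * frac x" using jeq by simp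
  have u: "b * frac x < real j + 1" using jeq by linarith
  have "real j / b \<le> frac x" using l b by (simp add: divide_simps mult.commute)
  moreover have "frac x < (real j + 1) / b" using u b by (simp add: divide_simps mult.commute)
  ultimately have "x \<in> {real_of_int \<lfloor>x\<rfloor> + real j / b ..< real_of_int \<lfloor>x\<rfloor> + (real j + 1) / b}"
    using fx by auto
  then show ?thesis unfolding Aset_def b_def j_def using assms by blast
qed

lemma bad_null:
  assumes "\<psi> \<in> S3"
  shows "{x. \<not> R3 \<psi> (Fm x)} \<in> null_sets lebesgue"
proof -
  have N: "(\<Union>k\<in>(UNIV::int set). limsup (Aset \<psi> k)) \<in> null_sets lborel"
    by (rule null_sets_UN') (auto intro: limsup_null[OF assms])
  have "{x. \<not> R3 \<psi> (Fm x)} \<subseteq> (\<Union>k\<in>(UNIV::int set). limsup (Aset \<psi> k))"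
  proof
    fix x assume "x \<in> {x. \<not> R3 \<psi> (Fm x)}"
    then have "\<not> (\<forall>\<^sub>F n in sequentially. dig n x \<notin> \<psi> n)"
      unfolding R3_def Fm_def by simp
    then have fr: "\<forall>N. \<exists>n\<ge>N. dig n x \<in> \<psi> n"
      unfolding eventually_sequentially by auto
    have "x \<in> limsup (Aset \<psi> \<lfloor>x\<rfloor>)"
      unfolding limsup_INF_SUP using fr in_Aset by fastforce
    then show "x \<in> (\<Union>k\<in>(UNIV::int set). limsup (Aset \<psi> k))" by blast
  qed
  then show ?thesis
    using null_sets_completion_subset null_sets_completionI[OF N] by blast
qed

lemma E_nonempty:
  assumes "(card_of E, cardSuc natLeq) \<in> ordIso"
  shows "E \<noteq> {}"
proof
  assume "E = {}"
  have "(natLeq, cardSuc natLeq) \<in> ordLess" by (rule cardSuc_greater[OF natLeq_Card_order])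
  then have "(natLeq, card_of E) \<in> ordLess" using assms ordLess_ordIso_trans ordIso_symmetric by blast
  moreover have "(card_of E, natLeq) \<in> ordLeq" using \<open>E = {}\<close> card_of_empty1 natLeq_Card_order by blast
  ultimately show False using not_ordLess_ordLeq by blast
qed

theorem lemma2:
  fixes E :: "(nat \<Rightarrow> nat) set"
  assumes "R3_param E"
    and "(card_of E, cardSuc natLeq) \<in> ordIso"
  shows "(\<forall>A. b3_witness E A \<longrightarrow> (\<exists>C. covN_witness C \<and> (card_of C, card_of A) \<in> ordLeq))
       \<and> (\<forall>X. nonN_witness X \<longrightarrow> (\<exists>D. d3_witness E D \<and> (card_of D, card_of X) \<in> ordLeq))"
proof -
  obtain e where e: "e \<in> E" using E_nonempty[OF assms(2)] by blast
  have FmS: "Fm x \<in> S3hat E" for x unfolding S3hat_def using e Fm_S3e by blast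
  have P1: "\<exists>C. covN_witness C \<and> (card_of C, card_of A) \<in> ordLeq" if A: "b3_witness E A" for A
  proof (intro exI conjI)
    let ?C = "(\<lambda>\<psi>. {x. \<not> R3 \<psi> (Fm x)}) ` A"
    show "covN_witness ?C"
      unfolding covN_witness_def
    proof
      show "?C \<subseteq> null_sets lebesgue" using A bad_null unfolding b3_witness_def by blast
      show "\<Union> ?C = UNIV"
      proof (rule set_eqI, rule iffI)
        fix x :: real
        have "\<not> (\<forall>\<psi>\<in>A. R3 \<psi> (Fm x))" using A FmS[of x] unfolding b3_witness_def by blast
        then show "x \<in> \<Union> ?C" by blast
      qed simp
    qed
    show "(card_of ?C, card_of A) \<in> ordLeq" by (rule card_of_image)
  qed
  have P2: "\<exists>D. d3_witness E D \<and> (card_of D, card_of X) \<in> ordLeq" if X: "nonN_witness X" for X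
  proof (intro exI conjI)
    show "d3_witness E (Fm ` X)"
      unfolding d3_witness_def
    proof
      show "Fm ` X \<subseteq> S3hat E" using FmS by blast
      show "\<forall>\<psi>\<in>S3. \<exists>\<phi>\<in>Fm ` X. R3 \<psi> \<phi>"
      proof
        fix \<psi> assume "\<psi> \<in> S3"
        then have n: "{x. \<not> R3 \<psi> (Fm x)} \<in> null_sets lebesgue" by (rule bad_null)
        have "\<not> X \<subseteq> {x. \<not> R3 \<psi> (Fm x)}"
        proof
          assume "X \<subseteq> {x. \<not> R3 \<psi> (Fm x)}"
          then have "X \<in> null_sets lebesgue" using n null_sets_completion_subset by blast
          then show False using X unfolding nonN_witness_def by blast
        qed
        then show "\<exists>\<phi>\<in>Fm ` X. R3 \<psi> \<phi>" by blast
      qed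
    qed
    show "(card_of (Fm ` X), card_of X) \<in> ordLeq" by (rule card_of_image)
  qed
  show ?thesis using P1 P2 by blast
qed

end
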